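(* Let $\mathbf S$ be an SRRW in $\mathbb{R}^d$ with parameter $\alpha\in[0,1)$ and step distribution $\mu\ne\delta_{\mathbf 0}$. For $R>0$ let $\zeta_R:=\inf\{n\in\mathbb N:\|\mathbf S_n\|\ge R\}$. Then $\mathbb E\zeta_R<\infty$ for every $R>0$.
   Context: SRRW: $\mu$ a probability measure on $\mathbb{R}^d$, $\alpha\in[0,1]$; $(\xi_n)_{n\ge2}$ i.i.d. Bernoulli($\alpha$), $(U[n])_{n\ge1}$ independent with $U[n]$ uniform on $\{1,\dots,n\}$. Sample $\mathbf X_1\sim\mu$; for $n\ge1$, if $\xi_{n+1}=1$ set $\mathbf X_{n+1}=\mathbf X_{U[n]}$, else sample $\mathbf X_{n+1}\sim\mu$ independently. $\mathbf S_0=\mathbf 0$, $\mathbf S_n=\sum_{i\le n}\mathbf X_i$. *)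

theory Defs
  imports "HOL-Probability.Probability"
begin

text \<open>Coordinate n of \<omega> is the triple
  (xi_n, U[n], Y_n): xi_n ~ Bernoulli(alpha), U[n] uniform on {1..n} (for n = 0 a dummy
  uniform on {1}, never used), Y_n ~ mu a fresh step; all coordinates independent.\<close>

definition srrw_space :: "real \<Rightarrow> 'a::euclidean_space measure \<Rightarrow> (nat \<Rightarrow> bool \<times> nat \<times> 'a) measure" where
  "srrw_space \<alpha> \<mu> = (\<Pi>\<^sub>M n\<in>UNIV. measure_pmf (bernoulli_pmf \<alpha>) \<Otimes>\<^sub>M
       (measure_pmf (pmf_of_set {1..max 1 n}) \<Otimes>\<^sub>M \<mu>))"

text \<open>srrw_path \<omega> n = [X_1, ..., X_n]. X_1 = Y_1; for n \<ge> 1,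
  X_{n+1} = X_{U[n]} if xi_{n+1} = 1, else X_{n+1} = Y_{n+1}.\<close>

fun srrw_path :: "(nat \<Rightarrow> bool \<times> nat \<times> 'a) \<Rightarrow> nat \<Rightarrow> 'a list" where
  "srrw_path \<omega> 0 = []"
| "srrw_path \<omega> (Suc n) = srrw_path \<omega> n @
     [if 1 \<le> n \<and> fst (\<omega> (Suc n)) then srrw_path \<omega> n ! (fst (snd (\<omega> n)) - 1)
      else snd (snd (\<omega> (Suc n)))]"

definition srrw_S :: "(nat \<Rightarrow> bool \<times> nat \<times> 'a::euclidean_space) \<Rightarrow> nat \<Rightarrow> 'a" where
  "srrw_S \<omega> n = sum_list (srrw_path \<omega> n)"

definition srrw_exit_time :: "real \<Rightarrow> (nat \<Rightarrow> bool \<times> nat \<times> 'a::euclidean_space) \<Rightarrow> ennreal" where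
  "srrw_exit_time R \<omega> =
     (if \<exists>n. norm (srrw_S \<omega> n) \<ge> R then of_nat (LEAST n. norm (srrw_S \<omega> n) \<ge> R) else \<infinity>)"

end

theory Submission
  imports Defs
begin


lemma srrw_S_Suc_fresh:
  assumes "\<not> fst (\<omega> (Suc n))"
  shows "srrw_S \<omega> (Suc n) = srrw_S \<omega> n + snd (snd (\<omega> (Suc n)))"
  using assms by (simp add: srrw_S_def)

definition goodset :: "'a::euclidean_space \<Rightarrow> real \<Rightarrow> (bool \<times> nat \<times> 'a) set" where
  "goodset c \<epsilon> = {x. \<not> fst x \<and> snd (snd x) \<bullet> c > \<epsilon>}"

lemma block_incr:
  assumes "\<forall>m\<in>{a<..a+k}. \<omega> m \<in> goodset c \<epsilon>"
  shows "srrw_S \<omega> (a+k) \<bullet> c \<ge> srrw_S \<omega> a \<bullet> c + real k * \<epsilon>"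
  using assms
proof (induction k)
  case 0
  then show ?case by simp
next
  case (Suc k)
  have g: "\<omega> (Suc (a+k)) \<in> goodset c \<epsilon>" using Suc.prems by auto
  have "srrw_S \<omega> (Suc (a+k)) = srrw_S \<omega> (a+k) + snd (snd (\<omega> (Suc (a+k))))"
    using g by (intro srrw_S_Suc_fresh) (simp add: goodset_def)
  moreover have "snd (snd (\<omega> (Suc (a+k)))) \<bullet> c > \<epsilon>" using g by (simp add: goodset_def)
  moreover have "srrw_S \<omega> (a+k) \<bullet> c \<ge> srrw_S \<omega> a \<bullet> c + real k * \<epsilon>"
    using Suc by auto
  ultimately show ?case by (simp add: inner_add_left algebra_simps)
qed

lemma block_exit:
  assumes "\<forall>m\<in>{a<..a+k}. \<omega> m \<in> goodset c \<epsilon>" and "real k * \<epsilon> > 2*R" and "norm c \<le> 1"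
  shows "srrw_exit_time R \<omega> \<le> of_nat (a+k)"
proof -
  have inc: "srrw_S \<omega> (a+k) \<bullet> c \<ge> srrw_S \<omega> a \<bullet> c + real k * \<epsilon>"
    by (rule block_incr[OF assms(1)])
  have b: "\<bar>x \<bullet> c\<bar> \<le> norm x" for x :: 'a
    using Cauchy_Schwarz_ineq2[of x c] assms(3)
    by (smt (verit) mult_left_le norm_ge_zero)
  have "norm (srrw_S \<omega> a) \<ge> R \<or> norm (srrw_S \<omega> (a+k)) \<ge> R"
    using b[of "srrw_S \<omega> a"] b[of "srrw_S \<omega> (a+k)"] inc assms(2) by linarith
  then obtain n where n: "n \<le> a+k" "norm (srrw_S \<omega> n) \<ge> R" by (metis le_add1 order_refl)
  then have ex: "\<exists>n. norm (srrw_S \<omega> n) \<ge> R" by auto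
  have "(LEAST n. norm (srrw_S \<omega> n) \<ge> R) \<le> n" by (rule Least_le) (rule n(2))
  with n have L: "(LEAST n. norm (srrw_S \<omega> n) \<ge> R) \<le> a+k" by linarith
  have "(of_nat (LEAST n. norm (srrw_S \<omega> n) \<ge> R) :: ennreal) \<le> of_nat (a+k)"
    using L by (rule of_nat_mono)
  with ex show ?thesis by (simp add: srrw_exit_time_def del: of_nat_add)
qed

lemma suminf_one_top: "(\<Sum>j. (1::ennreal)) = top"
proof -
  have "(\<Sum>j. ennreal ((\<lambda>_. 1::real) j)) = top"
    by (rule summable_iff_suminf_neq_top) (auto simp: summable_const_iff)
  then show ?thesis by simp
qed

definition blockev :: "nat \<Rightarrow> 'a::euclidean_space \<Rightarrow> real \<Rightarrow> nat \<Rightarrow> (nat \<Rightarrow> bool \<times> nat \<times> 'a) \<Rightarrow> bool" where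
  "blockev K c \<epsilon> i \<omega> = (\<forall>m\<in>{i*K<..i*K+K}. \<omega> m \<in> goodset c \<epsilon>)"

lemma exit_le_sum:
  assumes "real K * \<epsilon> > 2*R" and "norm c \<le> 1" and "R > 0"
  shows "srrw_exit_time R \<omega> \<le> of_nat K * (\<Sum>j. \<Prod>i<j. (if blockev K c \<epsilon> i \<omega> then 0 else 1::ennreal))"
proof (cases "\<exists>i. blockev K c \<epsilon> i \<omega>")
  case True
  define J where "J = (LEAST i. blockev K c \<epsilon> i \<omega>)"
  have EJ: "blockev K c \<epsilon> J \<omega>" unfolding J_def using True by (metis LeastI)
  have nE: "\<not> blockev K c \<epsilon> i \<omega>" if "i < J" for i
    using that unfolding J_def by (rule not_less_Least)
  have "srrw_exit_time R \<omega> \<le> of_nat (J*K+K)"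
    using EJ assms by (intro block_exit) (auto simp: blockev_def)
  also have "(of_nat (J*K+K)::ennreal) = of_nat K * (\<Sum>j<Suc J. 1)"
    by (simp add: algebra_simps)
  also have "(\<Sum>j<Suc J. 1) = (\<Sum>j<Suc J. \<Prod>i<j. (if blockev K c \<epsilon> i \<omega> then 0 else 1::ennreal))"
    using nE by (intro sum.cong refl) (auto intro!: prod.neutral[symmetric])
  also have "\<dots> \<le> (\<Sum>j. \<Prod>i<j. (if blockev K c \<epsilon> i \<omega> then 0 else 1::ennreal))"
    by (rule sum_le_suminf) auto
  finally show ?thesis by (simp add: mult_left_mono)
next
  case False
  then have "(\<Sum>j. \<Prod>i<j. (if blockev K c \<epsilon> i \<omega> then 0 else 1::ennreal)) = top"
    using suminf_one_top by simp
  moreover have "K > 0" using assms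
    by (cases K) auto
  ultimately show ?thesis by (simp add: ennreal_mult_top)
qed



lemma exists_dir:
  fixes \<mu> :: "'a::euclidean_space measure"
  assumes P: "prob_space \<mu>" and S: "sets \<mu> = sets borel" and N: "\<mu> \<noteq> return borel 0"
  shows "\<exists>c \<epsilon>. norm c \<le> 1 \<and> \<epsilon> > 0 \<and> measure \<mu> {y. y \<bullet> c > \<epsilon>} > 0"
proof (rule ccontr)
  interpret prob_space \<mu> by (rule P)
  assume H: "\<not> ?thesis"
  have sp: "space \<mu> = UNIV" using sets_eq_imp_space_eq[OF S] by simp
  have meas: "{y. y \<bullet> c > \<epsilon>} \<in> sets \<mu>" for c :: 'a and \<epsilon> :: real
    unfolding S by measurable
  have ae1: "AE y in \<mu>. \<not> (y \<bullet> c > \<epsilon>)" if "norm c \<le> 1" "\<epsilon> > 0" for c \<epsilon>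
  proof -
    have "\<not> measure \<mu> {y. y \<bullet> c > \<epsilon>} > 0" using H that by blast
    then have "measure \<mu> {y. y \<bullet> c > \<epsilon>} = 0" using measure_nonneg[of \<mu> "{y. y \<bullet> c > \<epsilon>}"] by linarith
    then have "emeasure \<mu> {y. y \<bullet> c > \<epsilon>} = 0" by (simp add: emeasure_eq_measure)
    then have "{y. y \<bullet> c > \<epsilon>} \<in> null_sets \<mu>" using meas by (simp add: null_setsI)
    then show ?thesis by (rule AE_I') (auto simp: sp)
  qed
  have "AE y in \<mu>. \<forall>b\<in>Basis. \<forall>s\<in>{1::real,-1}. \<forall>n::nat. \<not> (y \<bullet> (s *\<^sub>R b) > inverse (real (Suc n)))"
  proof (intro AE_finite_allI finite_Basis finite.intros, unfold AE_all_countable, intro allI)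
    fix b :: 'a and s :: real and n :: nat assume "b \<in> Basis" "s \<in> {1, -1}"
    then have "norm (s *\<^sub>R b) \<le> 1" by (auto simp: norm_Basis)
    then show "AE y in \<mu>. \<not> (y \<bullet> (s *\<^sub>R b) > inverse (real (Suc n)))"
      by (intro ae1) auto
  qed
  then have ae0: "AE y in \<mu>. y = 0"
  proof (rule AE_mp, intro AE_I2 impI)
    fix y :: 'a
    assume h: "\<forall>b\<in>Basis. \<forall>s\<in>{1::real,-1}. \<forall>n::nat. \<not> (y \<bullet> (s *\<^sub>R b) > inverse (real (Suc n)))"
    show "y = 0"
    proof (rule ccontr)
      assume "y \<noteq> 0"
      then obtain b where b: "b \<in> Basis" "y \<bullet> b \<noteq> 0" using euclidean_all_zero_iff by blast
      then have "\<bar>y \<bullet> b\<bar> > 0" by simp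
      then obtain n where n: "inverse (real (Suc n)) < \<bar>y \<bullet> b\<bar>" using reals_Archimedean by blast
      show False
      proof (cases "y \<bullet> b > 0")
        case True
        then show False using h b n by (auto dest!: bspec[of _ _ b])
      next
        case False
        then have "y \<bullet> ((-1) *\<^sub>R b) > inverse (real (Suc n))" using n by simp
        then show False using h b by (auto dest!: bspec[of _ _ b])
      qed
    qed
  qed
  have "\<mu> = return borel 0"
  proof (rule measure_eqI)
    show "sets \<mu> = sets (return borel 0)" using S by simp
    fix A assume A: "A \<in> sets \<mu>"
    then have Ab: "A \<in> sets borel" using S by simp
    show "emeasure \<mu> A = emeasure (return borel 0) A"
    proof (cases "0 \<in> A")
      case True
      have "emeasure \<mu> A = 1" using A ae0 True by (intro emeasure_eq_1_AE) auto
      then show ?thesis using True Ab by simp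
    next
      case False
      have "AE x in \<mu>. x \<notin> A" using ae0 False by auto
      then have "emeasure \<mu> A = 0" using A AE_iff_measurable[of A \<mu> "\<lambda>x. x \<notin> A"] sp by auto
      then show ?thesis using False Ab by simp
    qed
  qed
  with N show False by simp
qed



theorem lemma3p13:
  fixes \<mu> :: "'a::euclidean_space measure" and \<alpha> R :: real
  assumes "prob_space \<mu>" and "sets \<mu> = sets borel"
    and "0 \<le> \<alpha>" and "\<alpha> < 1"
    and "\<mu> \<noteq> return borel 0"
    and "R > 0"
  shows "(\<integral>\<^sup>+ \<omega>. srrw_exit_time R \<omega> \<partial>(srrw_space \<alpha> \<mu>)) < \<infinity>"
proof -
  note Pmu = assms(1) and Smu = assms(2)
  interpret mu: prob_space \<mu> by (rule Pmu)
  obtain c \<epsilon> where c: "norm c \<le> 1" and eps: "\<epsilon> > 0" and pos: "measure \<mu> {y. y \<bullet> c > \<epsilon>} > 0"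
    using exists_dir[OF assms(1,2,5)] by blast
  define B where "B = {y::'a. y \<bullet> c > \<epsilon>}"
  have Bs: "B \<in> sets \<mu>" unfolding B_def Smu by measurable
  define K where "K = nat \<lceil>2*R/\<epsilon>\<rceil> + 1"
  have "real K > 2*R/\<epsilon>" unfolding K_def by linarith
  then have KE: "real K * \<epsilon> > 2*R" using eps by (simp add: field_simps)
  define M' where "M' = (\<lambda>n::nat. measure_pmf (bernoulli_pmf \<alpha>) \<Otimes>\<^sub>M
       (measure_pmf (pmf_of_set {1..max 1 n}) \<Otimes>\<^sub>M \<mu>))"
  define P where "P = srrw_space \<alpha> \<mu>"
  have P_def': "P = PiM UNIV M'" unfolding P_def M'_def srrw_space_def ..
  have PM': "prob_space (M' n)" for n
    unfolding M'_def by (intro prob_space_pair prob_space_measure_pmf Pmu)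
  interpret P: prob_space P unfolding P_def' by (intro prob_space_PiM PM')
  have spmu: "space \<mu> = UNIV" using sets_eq_imp_space_eq[OF Smu] by simp
  have spM': "space (M' n) = UNIV" for n
    unfolding M'_def by (simp add: space_pair_measure spmu)
  have spP: "space P = UNIV" unfolding P_def' by (simp add: space_PiM spM')
  define G where "G = goodset c \<epsilon>"
  have G_eq: "G = {False} \<times> (UNIV \<times> B)" unfolding G_def goodset_def B_def by auto
  have GM': "G \<in> sets (M' n)" for n
    unfolding G_eq M'_def using Bs by (intro pair_measureI) auto
  define qr where "qr = (1-\<alpha>) * measure \<mu> B"
  have qr_pos: "qr > 0" unfolding qr_def B_def using pos assms(4) by simp
  have qr_le: "qr \<le> 1" unfolding qr_def using assms(3,4) mu.prob_le_1[of B]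
    by (simp add: mult_le_one)
  have emG: "emeasure (M' n) G = ennreal qr" for n
  proof -
    interpret s2: sigma_finite_measure "measure_pmf (pmf_of_set {1..max 1 n}) \<Otimes>\<^sub>M \<mu>"
      by (intro prob_space_imp_sigma_finite prob_space_pair prob_space_measure_pmf Pmu)
    have "emeasure (M' n) G = emeasure (measure_pmf (bernoulli_pmf \<alpha>)) {False} *
       emeasure (measure_pmf (pmf_of_set {1..max 1 n}) \<Otimes>\<^sub>M \<mu>) (UNIV \<times> B)"
      unfolding M'_def G_eq using Bs by (intro s2.emeasure_pair_measure_Times) auto
    also have "emeasure (measure_pmf (pmf_of_set {1..max 1 n}) \<Otimes>\<^sub>M \<mu>) (UNIV \<times> B) =
       emeasure (measure_pmf (pmf_of_set {1..max 1 n})) UNIV * emeasure \<mu> B"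
      using Bs by (intro mu.emeasure_pair_measure_Times) auto
    also have "emeasure (measure_pmf (pmf_of_set {1..max 1 n})) UNIV = 1"
      using measure_pmf.emeasure_space_1[of "pmf_of_set {1..max 1 n}"] by simp
    also have "emeasure (measure_pmf (bernoulli_pmf \<alpha>)) {False} = ennreal (1 - \<alpha>)"
      using assms(3,4) by (simp add: emeasure_pmf_single)
    finally show ?thesis
      by (simp add: qr_def mu.emeasure_eq_measure ennreal_mult' ennreal_mult'' assms(4))
  qed
  have rv: "(\<lambda>\<omega>. \<omega> i) \<in> measurable P (M' i)" for i
    unfolding P_def' by measurable
  have indc: "P.indep_vars M' (\<lambda>m \<omega>. \<omega> m) UNIV"
  proof (subst P.indep_vars_iff_distr_eq_PiM)
    show "UNIV \<noteq> {}" by simp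
    show "(\<lambda>\<omega>. \<omega> i) \<in> measurable P (M' i)" for i :: nat
      by (rule rv)
    have "distr P (PiM UNIV M') (\<lambda>x. \<lambda>i\<in>UNIV. x i) = distr P P (\<lambda>x. x)"
      unfolding P_def' by (simp add: restrict_def)
    also have "\<dots> = PiM UNIV M'" unfolding P_def' by simp
    also have "\<dots> = PiM UNIV (\<lambda>i. distr P (M' i) (\<lambda>x. x i))"
      unfolding P_def' by (intro PiM_cong refl) (rule distr_PiM_component[OF PM', symmetric], simp)
    finally show "distr P (PiM UNIV M') (\<lambda>x. \<lambda>i\<in>UNIV. x i) = PiM UNIV (\<lambda>i. distr P (M' i) (\<lambda>x. x i))" .
  qed
  define blk where "blk = (\<lambda>i. {i*K<..i*K+K})"
  have disj: "disjoint_family_on blk UNIV"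
  proof (unfold disjoint_family_on_def, intro ballI impI)
    fix i j :: nat assume "i \<noteq> j"
    have "blk i \<inter> blk j = {}" if "i < j" for i j
    proof -
      have "i*K + K \<le> j*K" using that by (metis add.commute mult_Suc mult_le_mono1 Suc_leI)
      then show ?thesis unfolding blk_def by auto
    qed
    then show "blk i \<inter> blk j = {}" using \<open>i \<noteq> j\<close> by (metis Int_commute linorder_neqE_nat)
  qed
  have indr: "P.indep_vars (\<lambda>i. PiM (blk i) M') (\<lambda>i \<omega>. restrict (\<lambda>m. \<omega> m) (blk i)) UNIV"
    by (rule P.indep_vars_restrict[OF indc _ disj]) auto
  define Y where "Y = (\<lambda>i x. if \<forall>m\<in>blk i. x m \<in> G then 0 else 1::ennreal)"
  have Ym: "Y i \<in> borel_measurable (PiM (blk i) M')" for i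
  proof -
    have fin: "finite (blk i)" unfolding blk_def by simp
    note GM'[measurable]
    show ?thesis unfolding Y_def using fin by measurable
  qed
  define F where "F = (\<lambda>i \<omega>. if blockev K c \<epsilon> i \<omega> then 0 else 1::ennreal)"
  have indF: "P.indep_vars (\<lambda>_. borel) F UNIV"
  proof -
    have "P.indep_vars (\<lambda>_. borel) (\<lambda>i \<omega>. Y i (restrict (\<lambda>m. \<omega> m) (blk i))) UNIV"
      by (rule P.indep_vars_compose2[OF indr Ym])
    also have "(\<lambda>i \<omega>. Y i (restrict (\<lambda>m. \<omega> m) (blk i))) = F"
      by (intro ext) (simp add: Y_def F_def blockev_def G_def blk_def)
    finally show ?thesis .
  qed
  define E where "E = (\<lambda>i. prod_emb UNIV M' (blk i) (\<Pi>\<^sub>E m\<in>blk i. G))"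
  have Es: "E i \<in> sets P" for i
    unfolding E_def P_def' blk_def using GM' by (intro sets_PiM_I) auto
  have cardb: "card (blk i) = K" for i unfolding blk_def by simp
  have emE: "emeasure P (E i) = ennreal (qr ^ K)" for i
  proof -
    have "emeasure P (E i) = (\<Prod>m\<in>blk i. emeasure (M' m) G)"
      unfolding E_def P_def' using GM' PM' by (intro emeasure_PiM_emb) (auto simp: blk_def)
    also have "\<dots> = ennreal qr ^ K" using cardb by (simp add: emG)
    finally show ?thesis using qr_pos by (simp add: ennreal_power)
  qed
  have F_ind: "F i = indicator (space P - E i)" for i
    by (intro ext) (auto simp: F_def E_def blockev_def prod_emb_def spP G_def blk_def PiE_def spM' Pi_iff split: split_indicator)
  have Fm[measurable]: "F i \<in> borel_measurable P" for i
    unfolding F_ind using Es by measurable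
  define r where "r = 1 - qr ^ K"
  have r0: "0 \<le> r" unfolding r_def using qr_pos qr_le by (simp add: power_le_one)
  have r1: "r < 1" unfolding r_def using qr_pos by simp
  have intF: "(\<integral>\<^sup>+\<omega>. F i \<omega> \<partial>P) = ennreal r" for i
  proof -
    have "(\<integral>\<^sup>+\<omega>. F i \<omega> \<partial>P) = emeasure P (space P - E i)"
      unfolding F_ind using Es by simp
    also have "\<dots> = emeasure P (space P) - emeasure P (E i)"
      using Es by (intro emeasure_compl) (auto simp: P.emeasure_eq_measure)
    also have "\<dots> = ennreal r"
      using qr_pos by (simp add: P.emeasure_space_1 emE r_def ennreal_minus flip: ennreal_1)
    finally show ?thesis .
  qed
  have intprod: "(\<integral>\<^sup>+\<omega>. (\<Prod>i<j. F i \<omega>) \<partial>P) = ennreal (r ^ j)" for j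
  proof -
    have "(\<integral>\<^sup>+\<omega>. (\<Prod>i<j. F i \<omega>) \<partial>P) = (\<Prod>i<j. \<integral>\<^sup>+\<omega>. F i \<omega> \<partial>P)"
      by (rule P.indep_vars_nn_integral) (auto intro: P.indep_vars_subset[OF indF])
    then show ?thesis using r0 by (simp add: intF ennreal_power)
  qed
  have "(\<integral>\<^sup>+ \<omega>. srrw_exit_time R \<omega> \<partial>P) \<le> (\<integral>\<^sup>+ \<omega>. of_nat K * (\<Sum>j. \<Prod>i<j. F i \<omega>) \<partial>P)"
    unfolding F_def using KE c assms(6) by (intro nn_integral_mono exit_le_sum) auto
  also have "\<dots> = of_nat K * (\<integral>\<^sup>+ \<omega>. (\<Sum>j. \<Prod>i<j. F i \<omega>) \<partial>P)"
    by (rule nn_integral_cmult) measurable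
  also have "(\<integral>\<^sup>+ \<omega>. (\<Sum>j. \<Prod>i<j. F i \<omega>) \<partial>P) = (\<Sum>j. \<integral>\<^sup>+ \<omega>. (\<Prod>i<j. F i \<omega>) \<partial>P)"
    by (rule nn_integral_suminf) measurable
  also have "\<dots> = (\<Sum>j. ennreal (r ^ j))" by (simp add: intprod)
  also have "\<dots> = ennreal (\<Sum>j. r ^ j)"
    using r0 r1 by (intro suminf_ennreal2) (auto intro: summable_geometric)
  finally have "(\<integral>\<^sup>+ \<omega>. srrw_exit_time R \<omega> \<partial>P) \<le> of_nat K * ennreal (\<Sum>j. r ^ j)" .
  also have "\<dots> < \<infinity>" by (simp add: ennreal_of_nat_eq_real_of_nat ennreal_mult_less_top)
  finally show ?thesis unfolding P_def .
qed

end
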